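(* Let $u=u(x,t)$ and $w=w(x,t)$ be smooth functions and let $\lambda\neq 0$ be a constant (spectral parameter). Define the $3\times 3$ matrices \[ A=\begin{pmatrix} 0 & -2 & 0 \\ -u & 0 & -2 \\ \frac{1}{72}\frac{w}{\lambda} + \lambda & -u & 0 \end{pmatrix}, \] \[ B=\begin{pmatrix} 2 u_{xxx} - 32 u u_x + 24 \lambda u & 4 u_{xx} - 32 u^2 & -144 \lambda \\ -u_{xxxx} + 18 u u_{xx} + 16 u_x^2 - 12 \lambda u_x - 16 u^3 + 72 \lambda^2 + w & -48 \lambda u & 4 u_{xx} - 32 u^2 \\ 4\lambda u_{xx} - 20 \lambda u^2-\frac{w (u_{xx} - 8 u^2)}{36\lambda} & b_{32} & -2 u_{xxx} + 32 u u_x + 24 \lambda u \end{pmatrix}, \] where $b_{32}=-u_{xxxx} + 18 u u_{xx} + 16 u_x^2 + 12 \lambda u_x - 16 u^3 + 72 \lambda^2+w$. Then the zero curvature equation \[ A_t-B_x+[A,B]=0,\qquad [A,B]=AB-BA, \] holds (for all $\lambda\neq 0$) if and only if $u,w$ satisfy the system \[ \begin{aligned} u_t &= u_{xxxxx}-20 u u_{xxx} -50 u_x u_{xx}+80 u^2 u_x-w_x,\\ w_t &= -6 w u_{xxx}-2 u_{xx} w_x+96 w u u_x+16 w_x u^2 . \end{aligned} \]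
   Context: Subscripts denote partial derivatives, e.g. $u_{xxx}=\partial^3 u/\partial x^3$, $A_t=\partial A/\partial t$, $B_x=\partial B/\partial x$ (entrywise). *)

theory Defs
  imports "HOL-Analysis.Analysis"
begin

text \<open>Functions of (x,t) are represented as functions on real \<times> real, first component x.\<close>

definition Dx :: "(real \<times> real \<Rightarrow> real) \<Rightarrow> real \<times> real \<Rightarrow> real" where
  "Dx f = (\<lambda>(x, t). deriv (\<lambda>y. f (y, t)) x)"

definition Dt :: "(real \<times> real \<Rightarrow> real) \<Rightarrow> real \<times> real \<Rightarrow> real" where
  "Dt f = (\<lambda>(x, t). deriv (\<lambda>s. f (x, s)) t)"

fun iter_partial :: "bool list \<Rightarrow> (real \<times> real \<Rightarrow> real) \<Rightarrow> real \<times> real \<Rightarrow> real" where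
  "iter_partial [] f = f"
| "iter_partial (b # bs) f = (if b then Dx else Dt) (iter_partial bs f)"

text \<open>Smooth (C-infinity) on R^2: every iterated partial derivative is (Frechet)
  differentiable everywhere (hence all partials exist and are continuous).\<close>
definition smooth2 :: "(real \<times> real \<Rightarrow> real) \<Rightarrow> bool" where
  "smooth2 f \<longleftrightarrow> (\<forall>bs p. iter_partial bs f differentiable (at p))"

definition mDx :: "(real \<times> real \<Rightarrow> real^'n^'m) \<Rightarrow> real \<times> real \<Rightarrow> real^'n^'m" where
  "mDx M p = (\<chi> i j. Dx (\<lambda>q. M q $ i $ j) p)"

definition mDt :: "(real \<times> real \<Rightarrow> real^'n^'m) \<Rightarrow> real \<times> real \<Rightarrow> real^'n^'m" where
  "mDt M p = (\<chi> i j. Dt (\<lambda>q. M q $ i $ j) p)"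

definition Lax_A :: "(real \<times> real \<Rightarrow> real) \<Rightarrow> (real \<times> real \<Rightarrow> real) \<Rightarrow> real
    \<Rightarrow> real \<times> real \<Rightarrow> real^3^3" where
  "Lax_A u w lam p = vector [
     vector [0, -2, 0],
     vector [- u p, 0, -2],
     vector [w p / (72 * lam) + lam, - u p, 0]]"

definition Lax_B :: "(real \<times> real \<Rightarrow> real) \<Rightarrow> (real \<times> real \<Rightarrow> real) \<Rightarrow> real
    \<Rightarrow> real \<times> real \<Rightarrow> real^3^3" where
  "Lax_B u w lam p = (let
     u0 = u p; u1 = Dx u p; u2 = Dx (Dx u) p; u3 = Dx (Dx (Dx u)) p;
     u4 = Dx (Dx (Dx (Dx u))) p; w0 = w p
   in vector [
     vector [2*u3 - 32*u0*u1 + 24*lam*u0, 4*u2 - 32*u0^2, -144*lam],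
     vector [- u4 + 18*u0*u2 + 16*u1^2 - 12*lam*u1 - 16*u0^3 + 72*lam^2 + w0,
             -48*lam*u0, 4*u2 - 32*u0^2],
     vector [4*lam*u2 - 20*lam*u0^2 - w0*(u2 - 8*u0^2)/(36*lam),
             - u4 + 18*u0*u2 + 16*u1^2 + 12*lam*u1 - 16*u0^3 + 72*lam^2 + w0,
             - 2*u3 + 32*u0*u1 + 24*lam*u0]])"

end

theory Submission
  imports Defs
begin

lemma iter_Dx: "iter_partial bs (Dx f) = iter_partial (bs @ [True]) f"
  by (induction bs) auto

lemma iter_Dt: "iter_partial bs (Dt f) = iter_partial (bs @ [False]) f"
  by (induction bs) auto

lemma smooth_Dx: "smooth2 f \<Longrightarrow> smooth2 (Dx f)"
  unfolding smooth2_def by (simp add: iter_Dx)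

lemma smooth_diff: "smooth2 f \<Longrightarrow> f differentiable (at p)"
  unfolding smooth2_def by (metis iter_partial.simps(1))

lemma hasDx: assumes "smooth2 f"
  shows "((\<lambda>y. f (y,t)) has_real_derivative Dx f (x,t)) (at x)"
proof -
  have "(\<lambda>y. (y,t)) differentiable (at x)"
    unfolding differentiable_def by (rule exI, rule has_derivative_Pair[OF has_derivative_ident has_derivative_const]) 
  moreover have "f differentiable (at ((\<lambda>y. (y,t)) x))" using smooth_diff[OF assms] by simp
  ultimately have "(f \<circ> (\<lambda>y. (y,t))) differentiable (at x)"
    by (rule differentiable_chain_at)
  hence "(\<lambda>y. f (y,t)) differentiable (at x)" by (simp add: o_def)
  thus ?thesis unfolding Dx_def using DERIV_deriv_iff_real_differentiable by auto
qed

lemma hasDt: assumes "smooth2 f"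
  shows "((\<lambda>s. f (x,s)) has_real_derivative Dt f (x,t)) (at t)"
proof -
  have "(\<lambda>s. (x,s)) differentiable (at t)"
    unfolding differentiable_def by (rule exI, rule has_derivative_Pair[OF has_derivative_const has_derivative_ident]) 
  moreover have "f differentiable (at ((\<lambda>s. (x,s)) t))" using smooth_diff[OF assms] by simp
  ultimately have "(f \<circ> (\<lambda>s. (x,s))) differentiable (at t)"
    by (rule differentiable_chain_at)
  hence "(\<lambda>s. f (x,s)) differentiable (at t)" by (simp add: o_def)
  thus ?thesis unfolding Dt_def using DERIV_deriv_iff_real_differentiable by auto
qed

lemma Dx_eq: "((\<lambda>y. g (y,t)) has_real_derivative D) (at x) \<Longrightarrow> Dx g (x,t) = D"
  unfolding Dx_def by (simp add: DERIV_imp_deriv)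

lemma Dt_eq: "((\<lambda>s. g (x,s)) has_real_derivative D) (at t) \<Longrightarrow> Dt g (x,t) = D"
  unfolding Dt_def by (simp add: DERIV_imp_deriv)


context
  fixes u w :: "real \<times> real \<Rightarrow> real" and lam x t :: real
  assumes su: "smooth2 u" and sw: "smooth2 w" and lam: "lam \<noteq> 0"
begin
lemmas s1 = smooth_Dx[OF su]
lemmas s2 = smooth_Dx[OF s1]
lemmas s3 = smooth_Dx[OF s2]
lemmas s4 = smooth_Dx[OF s3]
lemmas H = hasDx[OF su] hasDx[OF s1] hasDx[OF s2] hasDx[OF s3] hasDx[OF s4] hasDx[OF sw]

lemma bx11: "Dx (\<lambda>q. Lax_B u w lam q $ 1 $ 1) (x,t) = 2*(Dx (Dx (Dx (Dx u)))) (x,t) - 32*((Dx u) (x,t)^2+u (x,t)*(Dx (Dx u)) (x,t)) + 24*lam*(Dx u) (x,t)"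
  unfolding Lax_B_def Let_def
  apply simp
  apply (rule Dx_eq)
  apply (rule H derivative_eq_intros refl | simp add: lam)+
  apply (simp_all add: field_simps power2_eq_square lam)?
  done

lemma bx12: "Dx (\<lambda>q. Lax_B u w lam q $ 1 $ 2) (x,t) = 4*(Dx (Dx (Dx u))) (x,t) - 64*u (x,t)*(Dx u) (x,t)"
  unfolding Lax_B_def Let_def
  apply simp
  apply (rule Dx_eq)
  apply (rule H derivative_eq_intros refl | simp add: lam)+
  apply (simp_all add: field_simps power2_eq_square lam)?
  done

lemma bx13: "Dx (\<lambda>q. Lax_B u w lam q $ 1 $ 3) (x,t) = 0"
  unfolding Lax_B_def Let_def
  apply simp
  apply (rule Dx_eq)
  apply (rule H derivative_eq_intros refl | simp add: lam)+
  apply (simp_all add: field_simps power2_eq_square lam)?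
  done

lemma bx21: "Dx (\<lambda>q. Lax_B u w lam q $ 2 $ 1) (x,t) = (- (Dx (Dx (Dx (Dx (Dx u))))) (x,t) + 18*((Dx u) (x,t)*(Dx (Dx u)) (x,t)+u (x,t)*(Dx (Dx (Dx u))) (x,t)) + 32*(Dx u) (x,t)*(Dx (Dx u)) (x,t) - 48*u (x,t)^2*(Dx u) (x,t) + Dx w (x,t)) - 12*lam*(Dx (Dx u)) (x,t)"
  unfolding Lax_B_def Let_def
  apply simp
  apply (rule Dx_eq)
  apply (rule H derivative_eq_intros refl | simp add: lam)+
  apply (simp_all add: field_simps power2_eq_square lam)?
  done

lemma bx22: "Dx (\<lambda>q. Lax_B u w lam q $ 2 $ 2) (x,t) = -48*lam*(Dx u) (x,t)"
  unfolding Lax_B_def Let_def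
  apply simp
  apply (rule Dx_eq)
  apply (rule H derivative_eq_intros refl | simp add: lam)+
  apply (simp_all add: field_simps power2_eq_square lam)?
  done

lemma bx23: "Dx (\<lambda>q. Lax_B u w lam q $ 2 $ 3) (x,t) = 4*(Dx (Dx (Dx u))) (x,t) - 64*u (x,t)*(Dx u) (x,t)"
  unfolding Lax_B_def Let_def
  apply simp
  apply (rule Dx_eq)
  apply (rule H derivative_eq_intros refl | simp add: lam)+
  apply (simp_all add: field_simps power2_eq_square lam)?
  done

lemma bx31: "Dx (\<lambda>q. Lax_B u w lam q $ 3 $ 1) (x,t) = 4*lam*(Dx (Dx (Dx u))) (x,t) - 40*lam*u (x,t)*(Dx u) (x,t) - (Dx w (x,t)*((Dx (Dx u)) (x,t)-8*u (x,t)^2) + w (x,t)*((Dx (Dx (Dx u))) (x,t)-16*u (x,t)*(Dx u) (x,t)))/(36*lam)"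
  unfolding Lax_B_def Let_def
  apply simp
  apply (rule Dx_eq)
  apply (rule H derivative_eq_intros refl | simp add: lam)+
  apply (simp_all add: field_simps power2_eq_square lam)?
  done

lemma bx32: "Dx (\<lambda>q. Lax_B u w lam q $ 3 $ 2) (x,t) = (- (Dx (Dx (Dx (Dx (Dx u))))) (x,t) + 18*((Dx u) (x,t)*(Dx (Dx u)) (x,t)+u (x,t)*(Dx (Dx (Dx u))) (x,t)) + 32*(Dx u) (x,t)*(Dx (Dx u)) (x,t) - 48*u (x,t)^2*(Dx u) (x,t) + Dx w (x,t)) + 12*lam*(Dx (Dx u)) (x,t)"
  unfolding Lax_B_def Let_def
  apply simp
  apply (rule Dx_eq)
  apply (rule H derivative_eq_intros refl | simp add: lam)+
  apply (simp_all add: field_simps power2_eq_square lam)?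
  done

lemma bx33: "Dx (\<lambda>q. Lax_B u w lam q $ 3 $ 3) (x,t) = -2*(Dx (Dx (Dx (Dx u)))) (x,t) + 32*((Dx u) (x,t)^2+u (x,t)*(Dx (Dx u)) (x,t)) + 24*lam*(Dx u) (x,t)"
  unfolding Lax_B_def Let_def
  apply simp
  apply (rule Dx_eq)
  apply (rule H derivative_eq_intros refl | simp add: lam)+
  apply (simp_all add: field_simps power2_eq_square lam)?
  done

lemma at21: "Dt (\<lambda>q. Lax_A u w lam q $ 2 $ 1) (x,t) = - Dt u (x,t)"
  unfolding Lax_A_def apply simp
  apply (rule Dt_eq)
  apply (rule hasDt[OF su] hasDt[OF sw] derivative_eq_intros refl | simp add: lam)+
  apply (simp_all add: field_simps power2_eq_square lam)?
  done
lemma at32: "Dt (\<lambda>q. Lax_A u w lam q $ 3 $ 2) (x,t) = - Dt u (x,t)"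
  unfolding Lax_A_def apply simp
  apply (rule Dt_eq)
  apply (rule hasDt[OF su] hasDt[OF sw] derivative_eq_intros refl | simp add: lam)+
  apply (simp_all add: field_simps power2_eq_square lam)?
  done
lemma at31: "Dt (\<lambda>q. Lax_A u w lam q $ 3 $ 1) (x,t) = Dt w (x,t) / (72*lam)"
  unfolding Lax_A_def apply simp
  apply (rule Dt_eq)
  apply (rule hasDt[OF su] hasDt[OF sw] derivative_eq_intros refl | simp add: lam)+
  apply (simp_all add: field_simps power2_eq_square lam)?
  done
lemma at11: "Dt (\<lambda>q. Lax_A u w lam q $ 1 $ 1) (x,t) = 0"
  unfolding Lax_A_def apply simp
  apply (rule Dt_eq)
  apply (rule derivative_eq_intros refl | simp)+
  done
lemma at12: "Dt (\<lambda>q. Lax_A u w lam q $ 1 $ 2) (x,t) = 0"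
  unfolding Lax_A_def apply simp
  apply (rule Dt_eq)
  apply (rule derivative_eq_intros refl | simp)+
  done
lemma at13: "Dt (\<lambda>q. Lax_A u w lam q $ 1 $ 3) (x,t) = 0"
  unfolding Lax_A_def apply simp
  apply (rule Dt_eq)
  apply (rule derivative_eq_intros refl | simp)+
  done
lemma at22: "Dt (\<lambda>q. Lax_A u w lam q $ 2 $ 2) (x,t) = 0"
  unfolding Lax_A_def apply simp
  apply (rule Dt_eq)
  apply (rule derivative_eq_intros refl | simp)+
  done
lemma at23: "Dt (\<lambda>q. Lax_A u w lam q $ 2 $ 3) (x,t) = 0"
  unfolding Lax_A_def apply simp
  apply (rule Dt_eq)
  apply (rule derivative_eq_intros refl | simp)+
  done
lemma at33: "Dt (\<lambda>q. Lax_A u w lam q $ 3 $ 3) (x,t) = 0"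
  unfolding Lax_A_def apply simp
  apply (rule Dt_eq)
  apply (rule derivative_eq_intros refl | simp)+
  done

lemma key: "mDt (Lax_A u w lam) (x,t) - mDx (Lax_B u w lam) (x,t)
            + (Lax_A u w lam (x,t) ** Lax_B u w lam (x,t) - Lax_B u w lam (x,t) ** Lax_A u w lam (x,t))
   = vector [vector [0,0,0], vector [-(Dt u (x,t) - (Dx (Dx (Dx (Dx (Dx u)))) (x,t) - 20 * u (x,t) * Dx (Dx (Dx u)) (x,t) - 50 * Dx u (x,t) * Dx (Dx u) (x,t) + 80 * (u (x,t))^2 * Dx u (x,t) - Dx w (x,t))), 0, 0],
             vector [(Dt w (x,t) - (- 6 * w (x,t) * Dx (Dx (Dx u)) (x,t) - 2 * Dx (Dx u) (x,t) * Dx w (x,t) + 96 * w (x,t) * u (x,t) * Dx u (x,t) + 16 * Dx w (x,t) * (u (x,t))^2))/(72*lam), -(Dt u (x,t) - (Dx (Dx (Dx (Dx (Dx u)))) (x,t) - 20 * u (x,t) * Dx (Dx (Dx u)) (x,t) - 50 * Dx u (x,t) * Dx (Dx u) (x,t) + 80 * (u (x,t))^2 * Dx u (x,t) - Dx w (x,t))), 0]]"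
  apply (simp add: vec_eq_iff forall_3 mDt_def mDx_def bx11 bx12 bx13 bx21 bx22 bx23 bx31 bx32 bx33
     at11 at12 at13 at21 at22 at23 at31 at32 at33)
  apply (simp add: Lax_A_def Lax_B_def Let_def matrix_matrix_mult_def sum_3)
  apply (simp add: field_simps power2_eq_square power3_eq_cube lam)
  done
end
theorem mainTheorem1:
  fixes u w :: "real \<times> real \<Rightarrow> real"
  assumes "smooth2 u" and "smooth2 w"
  shows "(\<forall>lam::real. lam \<noteq> 0 \<longrightarrow> (\<forall>p.
            mDt (Lax_A u w lam) p - mDx (Lax_B u w lam) p
            + (Lax_A u w lam p ** Lax_B u w lam p - Lax_B u w lam p ** Lax_A u w lam p) = 0))
     \<longleftrightarrow>
         (\<forall>p. Dt u p = Dx (Dx (Dx (Dx (Dx u)))) p - 20 * u p * Dx (Dx (Dx u)) p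
                - 50 * Dx u p * Dx (Dx u) p + 80 * (u p)^2 * Dx u p - Dx w p
            \<and> Dt w p = - 6 * w p * Dx (Dx (Dx u)) p - 2 * Dx (Dx u) p * Dx w p
                + 96 * w p * u p * Dx u p + 16 * Dx w p * (u p)^2)"
proof
  assume L: "\<forall>lam::real. lam \<noteq> 0 \<longrightarrow> (\<forall>p.
            mDt (Lax_A u w lam) p - mDx (Lax_B u w lam) p
            + (Lax_A u w lam p ** Lax_B u w lam p - Lax_B u w lam p ** Lax_A u w lam p) = 0)"
  show "(\<forall>p. Dt u p = Dx (Dx (Dx (Dx (Dx u)))) p - 20 * u p * Dx (Dx (Dx u)) p
                - 50 * Dx u p * Dx (Dx u) p + 80 * (u p)^2 * Dx u p - Dx w p
            \<and> Dt w p = - 6 * w p * Dx (Dx (Dx u)) p - 2 * Dx (Dx u) p * Dx w p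
                + 96 * w p * u p * Dx u p + 16 * Dx w p * (u p)^2)"
  proof
    fix p :: "real \<times> real"
    obtain x t where p: "p = (x,t)" by (cases p)
    have "mDt (Lax_A u w 1) (x,t) - mDx (Lax_B u w 1) (x,t)
            + (Lax_A u w 1 (x,t) ** Lax_B u w 1 (x,t) - Lax_B u w 1 (x,t) ** Lax_A u w 1 (x,t)) = 0"
      using L by simp
    hence E: "(vector [vector [0,0,0], vector [-(Dt u (x,t) - (Dx (Dx (Dx (Dx (Dx u)))) (x,t) - 20 * u (x,t) * Dx (Dx (Dx u)) (x,t) - 50 * Dx u (x,t) * Dx (Dx u) (x,t) + 80 * (u (x,t))^2 * Dx u (x,t) - Dx w (x,t))), 0, 0],
             vector [(Dt w (x,t) - (- 6 * w (x,t) * Dx (Dx (Dx u)) (x,t) - 2 * Dx (Dx u) (x,t) * Dx w (x,t) + 96 * w (x,t) * u (x,t) * Dx u (x,t) + 16 * Dx w (x,t) * (u (x,t))^2))/(72*1), -(Dt u (x,t) - (Dx (Dx (Dx (Dx (Dx u)))) (x,t) - 20 * u (x,t) * Dx (Dx (Dx u)) (x,t) - 50 * Dx u (x,t) * Dx (Dx u) (x,t) + 80 * (u (x,t))^2 * Dx u (x,t) - Dx w (x,t))), 0]] :: real^3^3) = 0"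
      using key[OF assms, of 1 x t] by simp
    have "Dt u (x,t) = Dx (Dx (Dx (Dx (Dx u)))) (x,t) - 20 * u (x,t) * Dx (Dx (Dx u)) (x,t) - 50 * Dx u (x,t) * Dx (Dx u) (x,t) + 80 * (u (x,t))^2 * Dx u (x,t) - Dx w (x,t)" using arg_cong[OF E, of "\<lambda>M. M $ 2 $ 1"] by simp
    moreover have "Dt w (x,t) = - 6 * w (x,t) * Dx (Dx (Dx u)) (x,t) - 2 * Dx (Dx u) (x,t) * Dx w (x,t) + 96 * w (x,t) * u (x,t) * Dx u (x,t) + 16 * Dx w (x,t) * (u (x,t))^2" using arg_cong[OF E, of "\<lambda>M. M $ 3 $ 1"] by simp
    ultimately show "Dt u p = Dx (Dx (Dx (Dx (Dx u)))) p - 20 * u p * Dx (Dx (Dx u)) p - 50 * Dx u p * Dx (Dx u) p + 80 * (u p)^2 * Dx u p - Dx w p \<and> Dt w p = - 6 * w p * Dx (Dx (Dx u)) p - 2 * Dx (Dx u) p * Dx w p + 96 * w p * u p * Dx u p + 16 * Dx w p * (u p)^2" unfolding p by simp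
  qed
next
  assume R: "(\<forall>p. Dt u p = Dx (Dx (Dx (Dx (Dx u)))) p - 20 * u p * Dx (Dx (Dx u)) p
                - 50 * Dx u p * Dx (Dx u) p + 80 * (u p)^2 * Dx u p - Dx w p
            \<and> Dt w p = - 6 * w p * Dx (Dx (Dx u)) p - 2 * Dx (Dx u) p * Dx w p
                + 96 * w p * u p * Dx u p + 16 * Dx w p * (u p)^2)"
  show "\<forall>lam::real. lam \<noteq> 0 \<longrightarrow> (\<forall>p. mDt (Lax_A u w lam) p - mDx (Lax_B u w lam) p + (Lax_A u w lam p ** Lax_B u w lam p - Lax_B u w lam p ** Lax_A u w lam p) = 0)"
  proof (intro allI impI)
    fix lam :: real and p :: "real \<times> real"
    assume lam: "lam \<noteq> 0"
    obtain x t where p: "p = (x,t)" by (cases p)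
    have "Dt u (x,t) = Dx (Dx (Dx (Dx (Dx u)))) (x,t) - 20 * u (x,t) * Dx (Dx (Dx u)) (x,t) - 50 * Dx u (x,t) * Dx (Dx u) (x,t) + 80 * (u (x,t))^2 * Dx u (x,t) - Dx w (x,t)" "Dt w (x,t) = - 6 * w (x,t) * Dx (Dx (Dx u)) (x,t) - 2 * Dx (Dx u) (x,t) * Dx w (x,t) + 96 * w (x,t) * u (x,t) * Dx u (x,t) + 16 * Dx w (x,t) * (u (x,t))^2" using R[rule_format, of "(x,t)"] by auto
    then show "mDt (Lax_A u w lam) p - mDx (Lax_B u w lam) p
            + (Lax_A u w lam p ** Lax_B u w lam p - Lax_B u w lam p ** Lax_A u w lam p) = 0"
      unfolding p key[OF assms lam] by (simp add: vec_eq_iff forall_3)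
  qed
qed

end
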